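(* Let $X$ be a finite $T_0$ topological space, $\mathcal V$ a multivector field on $X$ with $X$ invariant, $\mathcal M=\{M_p\mid p\in\mathbb P\}$ a Morse predecomposition of $X$, and $\le$ an admissible preorder on $\mathbb P$. Let $\mathcal Q$ be a partition of $\mathbb P$ into nonempty subsets that are convex with respect to $\le$, and suppose that the relation $\le_{\mathcal Q}$ on $\mathcal Q$, defined by $Q\le_{\mathcal Q}Q'$ iff there exist $q\in Q$, $q'\in Q'$ with $q\le q'$, is a partial order. Then $\mathcal M':=\{M_Q\mid Q\in\mathcal Q\}$ is a Morse decomposition of $X$.
   Context: Notation: $\operatorname{cl}$ is closure; $A\subset X$ is locally closed if $\operatorname{cl}A\setminus A$ is closed. A multivector field $\mathcal V$ on $X$ is a partition of $X$ into locally closed sets (multivectors); $[x]_{\mathcal V}$ is the multivector containing $x$. A multivector $V$ is critical if $H(\operatorname{cl}V,\operatorname{cl}V\setminus V)$ (relative singular homology) is nontrivial, regular otherwise. $A$ is $\mathcal V$-compatible if it is a union of multivectors; $\langle A\rangle_{\mathcal V}$ is the smallest locally closed $\mathcal V$-compatible set containing $A$. $\Pi_{\mathcal V}(x)=\operatorname{cl}\{x\}\cup[x]_{\mathcal V}$. A solution is a partial map $\gamma:\mathbb Z\nrightarrow X$ with domain an integer interval and $\gamma(t+1)\in\Pi_{\mathcal V}(\gamma(t))$; a path has finite domain; a full solution has domain $\mathbb Z$. $\alpha(\gamma)=\langle\bigcap_{t\le0}\gamma((-\infty,t])\rangle_{\mathcal V}$, $\omega(\gamma)=\langle\bigcap_{t\ge0}\gamma([t,\infty))\rangle_{\mathcal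 V}$. A full solution is essential unless $\alpha(\gamma)$ or $\omega(\gamma)$ lies in a single regular multivector; an essential solution in $A$ is one with image in $A$. $\operatorname{Inv}S$ is the set of $x\in S$ with an essential solution $\gamma$ in $S$, $\gamma(0)=x$; $S$ is invariant if $\operatorname{Inv}S=S$. An invariant $S$ is isolated invariant if there is a closed $N\supset\Pi_{\mathcal V}(S)$ such that every path in $N$ with endpoints in $S$ has image in $S$. A full solution is a link from $S_1$ to $S_2$ if $\alpha(\gamma)\cap S_1\ne\emptyset\ne\omega(\gamma)\cap S_2$. A Morse predecomposition of $X$ is an indexed family of mutually disjoint isolated invariant subsets $\{M_p\mid p\in\mathbb P\}$ such that every essential solution in $X$ is a link from some $M_p$ to some $M_q$. A preorder $\le$ on $\mathbb P$ is admissible if a link from $M_p$ to $M_q$ implies $q\le p$. $\mathbb Q\subset\mathbb P$ is convex w.r.t. $\le$ if $p\le r\le q$ with $p,q\in\mathbb Q$ implies $r\in\mathbb Q$. An invariant $T$ is saturated if every essential solution $\gamma$ in $X$ with $\alpha(\gamma)\cup\omega(\gamma)\subset T$ has $\operatorname{im}\gamma\subset T$. A Morse decomposition is a Morse predecomposition with all members saturated and some admissible preorder being a partial order (here $\mathcal M'$ is indexed by $\mathcal Q$). For $C\subset X$, $\mathbb P_C=\{p\mid M_p\cap C\ne\emptyset\}$; for $\mathbb Q\subset\mathbb P$, $\operatorname{eSol}_{\mathbb Q}(X)$ is the set of essential solutions $\gamma$ in $X$ with $\mathbb P_{\alpha(\gamma)}\cap\mathbb Q\ne\emptyset\ne\mathbb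 P_{\omega(\gamma)}\cap\mathbb Q$, and $M_{\mathbb Q}=\bigcup\{\operatorname{im}\gamma\mid\gamma\in\operatorname{eSol}_{\mathbb Q}(X)\}$. *)

theory Defs
  imports "HOL-Analysis.Analysis" "HOL-Homology.Homology"
begin

definition locally_closed :: "'a topology \<Rightarrow> 'a set \<Rightarrow> bool" where
  "locally_closed X A \<longleftrightarrow> A \<subseteq> topspace X \<and> closedin X (X closure_of A - A)"

definition multivector_field :: "'a topology \<Rightarrow> 'a set set \<Rightarrow> bool" where
  "multivector_field X V \<longleftrightarrow>
     (\<forall>v\<in>V. v \<noteq> {} \<and> locally_closed X v) \<and> \<Union>V = topspace X \<and>
     (\<forall>v\<in>V. \<forall>w\<in>V. v \<noteq> w \<longrightarrow> v \<inter> w = {})"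

definition mv :: "'a set set \<Rightarrow> 'a \<Rightarrow> 'a set" where
  "mv V x = (THE v. v \<in> V \<and> x \<in> v)"

definition critical :: "'a topology \<Rightarrow> 'a set \<Rightarrow> bool" where
  "critical X v \<longleftrightarrow>
     (\<exists>p. \<not> trivial_group
            (relative_homology_group p (subtopology X (X closure_of v)) (X closure_of v - v)))"

definition regular :: "'a topology \<Rightarrow> 'a set \<Rightarrow> bool" where
  "regular X v \<longleftrightarrow> \<not> critical X v"

definition compatible :: "'a set set \<Rightarrow> 'a set \<Rightarrow> bool" where
  "compatible V A \<longleftrightarrow> (\<exists>W \<subseteq> V. A = \<Union>W)"

definition lc_hull :: "'a topology \<Rightarrow> 'a set set \<Rightarrow> 'a set \<Rightarrow> 'a set" where
  "lc_hull X V A = \<Inter>{B. A \<subseteq> B \<and> locally_closed X B \<and> compatible V B}"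

definition Pi_mv :: "'a topology \<Rightarrow> 'a set set \<Rightarrow> 'a \<Rightarrow> 'a set" where
  "Pi_mv X V x = X closure_of {x} \<union> mv V x"

definition full_solution :: "'a topology \<Rightarrow> 'a set set \<Rightarrow> (int \<Rightarrow> 'a) \<Rightarrow> bool" where
  "full_solution X V \<gamma> \<longleftrightarrow> (\<forall>t. \<gamma> t \<in> topspace X \<and> \<gamma> (t + 1) \<in> Pi_mv X V (\<gamma> t))"

definition sol_path :: "'a topology \<Rightarrow> 'a set set \<Rightarrow> (int \<Rightarrow> 'a) \<Rightarrow> int \<Rightarrow> int \<Rightarrow> bool" where
  "sol_path X V \<gamma> a b \<longleftrightarrow> a \<le> b \<and>
     (\<forall>t\<in>{a..b}. \<gamma> t \<in> topspace X \<and> (t < b \<longrightarrow> \<gamma> (t + 1) \<in> Pi_mv X V (\<gamma> t)))"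

definition alpha_lim :: "'a topology \<Rightarrow> 'a set set \<Rightarrow> (int \<Rightarrow> 'a) \<Rightarrow> 'a set" where
  "alpha_lim X V \<gamma> = lc_hull X V (\<Inter>t\<in>{..0}. \<gamma> ` {..t})"

definition omega_lim :: "'a topology \<Rightarrow> 'a set set \<Rightarrow> (int \<Rightarrow> 'a) \<Rightarrow> 'a set" where
  "omega_lim X V \<gamma> = lc_hull X V (\<Inter>t\<in>{0..}. \<gamma> ` {t..})"

definition essential :: "'a topology \<Rightarrow> 'a set set \<Rightarrow> (int \<Rightarrow> 'a) \<Rightarrow> bool" where
  "essential X V \<gamma> \<longleftrightarrow> full_solution X V \<gamma> \<and>
     \<not> (\<exists>v\<in>V. regular X v \<and> (alpha_lim X V \<gamma> \<subseteq> v \<or> omega_lim X V \<gamma> \<subseteq> v))"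

definition ess_sol_in :: "'a topology \<Rightarrow> 'a set set \<Rightarrow> 'a set \<Rightarrow> (int \<Rightarrow> 'a) \<Rightarrow> bool" where
  "ess_sol_in X V S \<gamma> \<longleftrightarrow> essential X V \<gamma> \<and> range \<gamma> \<subseteq> S"

definition Inv :: "'a topology \<Rightarrow> 'a set set \<Rightarrow> 'a set \<Rightarrow> 'a set" where
  "Inv X V S = {x \<in> S. \<exists>\<gamma>. ess_sol_in X V S \<gamma> \<and> \<gamma> 0 = x}"

definition invariant :: "'a topology \<Rightarrow> 'a set set \<Rightarrow> 'a set \<Rightarrow> bool" where
  "invariant X V S \<longleftrightarrow> Inv X V S = S"

definition isolated_invariant :: "'a topology \<Rightarrow> 'a set set \<Rightarrow> 'a set \<Rightarrow> bool" where
  "isolated_invariant X V S \<longleftrightarrow> invariant X V S \<and>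
     (\<exists>N. closedin X N \<and> (\<Union>x\<in>S. Pi_mv X V x) \<subseteq> N \<and>
        (\<forall>\<gamma> a b. sol_path X V \<gamma> a b \<and> \<gamma> ` {a..b} \<subseteq> N \<and> \<gamma> a \<in> S \<and> \<gamma> b \<in> S
                   \<longrightarrow> \<gamma> ` {a..b} \<subseteq> S))"

definition link :: "'a topology \<Rightarrow> 'a set set \<Rightarrow> (int \<Rightarrow> 'a) \<Rightarrow> 'a set \<Rightarrow> 'a set \<Rightarrow> bool" where
  "link X V \<gamma> S1 S2 \<longleftrightarrow> full_solution X V \<gamma> \<and>
     alpha_lim X V \<gamma> \<inter> S1 \<noteq> {} \<and> omega_lim X V \<gamma> \<inter> S2 \<noteq> {}"

definition morse_predecomposition ::
  "'a topology \<Rightarrow> 'a set set \<Rightarrow> 'p set \<Rightarrow> ('p \<Rightarrow> 'a set) \<Rightarrow> bool" where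
  "morse_predecomposition X V P M \<longleftrightarrow>
     (\<forall>p\<in>P. \<forall>q\<in>P. p \<noteq> q \<longrightarrow> M p \<inter> M q = {}) \<and>
     (\<forall>p\<in>P. isolated_invariant X V (M p)) \<and>
     (\<forall>\<gamma>. ess_sol_in X V (topspace X) \<gamma> \<longrightarrow> (\<exists>p\<in>P. \<exists>q\<in>P. link X V \<gamma> (M p) (M q)))"

definition preorder_on :: "'p set \<Rightarrow> ('p \<Rightarrow> 'p \<Rightarrow> bool) \<Rightarrow> bool" where
  "preorder_on P leq \<longleftrightarrow> (\<forall>p\<in>P. leq p p) \<and>
     (\<forall>p\<in>P. \<forall>q\<in>P. \<forall>r\<in>P. leq p q \<and> leq q r \<longrightarrow> leq p r)"

definition partial_order_on' :: "'p set \<Rightarrow> ('p \<Rightarrow> 'p \<Rightarrow> bool) \<Rightarrow> bool" where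
  "partial_order_on' P leq \<longleftrightarrow> preorder_on P leq \<and>
     (\<forall>p\<in>P. \<forall>q\<in>P. leq p q \<and> leq q p \<longrightarrow> p = q)"

definition admissible ::
  "'a topology \<Rightarrow> 'a set set \<Rightarrow> 'p set \<Rightarrow> ('p \<Rightarrow> 'a set) \<Rightarrow> ('p \<Rightarrow> 'p \<Rightarrow> bool) \<Rightarrow> bool" where
  "admissible X V P M leq \<longleftrightarrow> preorder_on P leq \<and>
     (\<forall>p\<in>P. \<forall>q\<in>P. (\<exists>\<gamma>. link X V \<gamma> (M p) (M q)) \<longrightarrow> leq q p)"

definition saturated :: "'a topology \<Rightarrow> 'a set set \<Rightarrow> 'a set \<Rightarrow> bool" where
  "saturated X V T \<longleftrightarrow> invariant X V T \<and>
     (\<forall>\<gamma>. ess_sol_in X V (topspace X) \<gamma> \<and> alpha_lim X V \<gamma> \<union> omega_lim X V \<gamma> \<subseteq> T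
          \<longrightarrow> range \<gamma> \<subseteq> T)"

definition morse_decomposition ::
  "'a topology \<Rightarrow> 'a set set \<Rightarrow> 'p set \<Rightarrow> ('p \<Rightarrow> 'a set) \<Rightarrow> bool" where
  "morse_decomposition X V P M \<longleftrightarrow> morse_predecomposition X V P M \<and>
     (\<forall>p\<in>P. saturated X V (M p)) \<and>
     (\<exists>leq. admissible X V P M leq \<and> partial_order_on' P leq)"

definition convex_wrt :: "'p set \<Rightarrow> ('p \<Rightarrow> 'p \<Rightarrow> bool) \<Rightarrow> 'p set \<Rightarrow> bool" where
  "convex_wrt P leq Q \<longleftrightarrow> (\<forall>p\<in>Q. \<forall>q\<in>Q. \<forall>r\<in>P. leq p r \<and> leq r q \<longrightarrow> r \<in> Q)"

definition set_partition :: "'p set \<Rightarrow> 'p set set \<Rightarrow> bool" where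
  "set_partition P \<Q> \<longleftrightarrow> (\<forall>Q\<in>\<Q>. Q \<noteq> {}) \<and> \<Union>\<Q> = P \<and>
     (\<forall>Q\<in>\<Q>. \<forall>Q'\<in>\<Q>. Q \<noteq> Q' \<longrightarrow> Q \<inter> Q' = {})"

definition induced_le :: "('p \<Rightarrow> 'p \<Rightarrow> bool) \<Rightarrow> 'p set \<Rightarrow> 'p set \<Rightarrow> bool" where
  "induced_le leq Q Q' \<longleftrightarrow> (\<exists>q\<in>Q. \<exists>q'\<in>Q'. leq q q')"

definition idx_meet :: "'p set \<Rightarrow> ('p \<Rightarrow> 'a set) \<Rightarrow> 'a set \<Rightarrow> 'p set" where
  "idx_meet P M C = {p \<in> P. M p \<inter> C \<noteq> {}}"

definition eSol :: "'a topology \<Rightarrow> 'a set set \<Rightarrow> 'p set \<Rightarrow> ('p \<Rightarrow> 'a set) \<Rightarrow> 'p set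
                    \<Rightarrow> (int \<Rightarrow> 'a) set" where
  "eSol X V P M Q = {\<gamma>. ess_sol_in X V (topspace X) \<gamma> \<and>
      idx_meet P M (alpha_lim X V \<gamma>) \<inter> Q \<noteq> {} \<and> idx_meet P M (omega_lim X V \<gamma>) \<inter> Q \<noteq> {}}"

definition M_Q :: "'a topology \<Rightarrow> 'a set set \<Rightarrow> 'p set \<Rightarrow> ('p \<Rightarrow> 'a set) \<Rightarrow> 'p set \<Rightarrow> 'a set" where
  "M_Q X V P M Q = (\<Union>\<gamma>\<in>eSol X V P M Q. range \<gamma>)"

end

theory Submission
  imports Defs
begin



lemma lc_finite:
  assumes fin: "finite (topspace X)" and S: "S \<subseteq> topspace X"
    and H: "\<And>x a b. x \<in> S \<Longrightarrow> a \<in> X closure_of {x} \<Longrightarrow> b \<in> X closure_of {a} \<Longrightarrow> b \<in> S \<Longrightarrow> a \<in> S"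
  shows "locally_closed X S"
proof -
  have finS: "finite S" using fin S finite_subset by blast
  have clS: "X closure_of S = (\<Union>x\<in>S. X closure_of {x})"
  proof -
    have "S = \<Union>((\<lambda>x. {x}) ` S)" by auto
    hence "X closure_of S = X closure_of \<Union>((\<lambda>x. {x}) ` S)" by simp
    also have "\<dots> = (\<Union>x\<in>S. X closure_of {x})"
      using finS by (subst closure_of_Union) auto
    finally show ?thesis .
  qed
  have eq: "X closure_of S - S = (\<Union>a\<in>X closure_of S - S. X closure_of {a})"
  proof
    show "X closure_of S - S \<subseteq> (\<Union>a\<in>X closure_of S - S. X closure_of {a})"
    proof
      fix a assume a: "a \<in> X closure_of S - S"
      hence "a \<in> topspace X" using closure_of_subset_topspace[of X S] by blast
      hence "a \<in> X closure_of {a}" using closure_of_subset[of "{a}" X] by auto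
      thus "a \<in> (\<Union>a\<in>X closure_of S - S. X closure_of {a})" using a by blast
    qed
  next
    show "(\<Union>a\<in>X closure_of S - S. X closure_of {a}) \<subseteq> X closure_of S - S"
    proof
      fix b assume "b \<in> (\<Union>a\<in>X closure_of S - S. X closure_of {a})"
      then obtain a where a: "a \<in> X closure_of S" "a \<notin> S" and b: "b \<in> X closure_of {a}" by blast
      from a clS obtain x where x: "x \<in> S" "a \<in> X closure_of {x}" by blast
      have "X closure_of {a} \<subseteq> X closure_of (X closure_of {x})"
        using x(2) by (intro closure_of_mono) auto
      hence "X closure_of {a} \<subseteq> X closure_of {x}" by simp
      hence "b \<in> X closure_of {x}" using b by blast
      hence "b \<in> X closure_of S" using clS x(1) by blast
      moreover have "b \<notin> S" using H[OF x(1) x(2) b] a(2) by blast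
      ultimately show "b \<in> X closure_of S - S" by blast
    qed
  qed
  have "finite (X closure_of S - S)"
    using fin closure_of_subset_topspace finite_subset by (metis Diff_subset subset_trans)
  hence "closedin X (\<Union>a\<in>X closure_of S - S. X closure_of {a})"
    by (intro closedin_Union) auto
  with eq S show ?thesis unfolding locally_closed_def by simp
qed

lemma mv_eq:
  assumes "multivector_field X V" "v \<in> V" "x \<in> v"
  shows "mv V x = v"
proof -
  have d: "\<forall>v\<in>V. \<forall>w\<in>V. v \<noteq> w \<longrightarrow> v \<inter> w = {}"
    using assms(1) unfolding multivector_field_def by simp
  have u: "w = v" if "w \<in> V" "x \<in> w" for w
  proof (rule ccontr)
    assume "w \<noteq> v"
    hence "w \<inter> v = {}" using d that(1) assms(2) by blast
    thus False using that(2) assms(3) by blast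
  qed
  show ?thesis unfolding mv_def
    apply (rule the_equality)
    using assms(2,3) u by blast+
qed

lemma mv_props:
  assumes "multivector_field X V" "x \<in> topspace X"
  shows "mv V x \<in> V" "x \<in> mv V x"
proof -
  have "\<Union>V = topspace X" using assms(1) unfolding multivector_field_def by simp
  then obtain v where v: "v \<in> V" "x \<in> v" using assms(2) by blast
  thus "mv V x \<in> V" "x \<in> mv V x" using mv_eq[OF assms(1) v] by auto
qed

lemma mv_sub:
  assumes "multivector_field X V" "x \<in> topspace X"
  shows "mv V x \<subseteq> topspace X"
proof -
  have "\<Union>V = topspace X" using assms(1) unfolding multivector_field_def by simp
  thus ?thesis using mv_props(1)[OF assms] by blast
qed

lemma Pi_sub:
  assumes "multivector_field X V" "x \<in> topspace X"
  shows "Pi_mv X V x \<subseteq> topspace X"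
  using mv_sub[OF assms] closure_of_subset_topspace[of X "{x}"] unfolding Pi_mv_def by blast

lemma Pi_self:
  assumes "multivector_field X V" "x \<in> topspace X"
  shows "x \<in> Pi_mv X V x"
  using mv_props[OF assms] unfolding Pi_mv_def by blast

lemma lc_hull_least:
  assumes "A \<subseteq> B" "locally_closed X B" "compatible V B"
  shows "lc_hull X V A \<subseteq> B"
  unfolding lc_hull_def by (rule Inter_lower) (simp add: assms)

definition rp :: "(int \<Rightarrow> 'a) \<Rightarrow> 'a set" where
  "rp \<gamma> = {x. \<forall>t. \<exists>s\<le>t. \<gamma> s = x}"
definition rf :: "(int \<Rightarrow> 'a) \<Rightarrow> 'a set" where
  "rf \<gamma> = {x. \<forall>t. \<exists>s\<ge>t. \<gamma> s = x}"

lemma rp_eq: "(\<Inter>t\<in>{..0}. \<gamma> ` {..t}) = rp \<gamma>"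
proof
  show "(\<Inter>t\<in>{..0}. \<gamma> ` {..t}) \<subseteq> rp \<gamma>"
  proof
    fix x assume x: "x \<in> (\<Inter>t\<in>{..0}. \<gamma> ` {..t})"
    { fix t :: int
      have "x \<in> \<gamma> ` {..min t 0}" using x by auto
      then obtain s where "s \<le> min t 0" "\<gamma> s = x" by auto
      hence "\<exists>s\<le>t. \<gamma> s = x" by auto }
    thus "x \<in> rp \<gamma>" unfolding rp_def by blast
  qed
qed (auto simp: rp_def)

lemma rf_eq: "(\<Inter>t\<in>{0..}. \<gamma> ` {t..}) = rf \<gamma>"
proof
  show "(\<Inter>t\<in>{0..}. \<gamma> ` {t..}) \<subseteq> rf \<gamma>"
  proof
    fix x assume x: "x \<in> (\<Inter>t\<in>{0..}. \<gamma> ` {t..})"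
    { fix t :: int
      have "x \<in> \<gamma> ` {max t 0..}" using x by auto
      then obtain s where "s \<ge> max t 0" "\<gamma> s = x" by auto
      hence "\<exists>s\<ge>t. \<gamma> s = x" by auto }
    thus "x \<in> rf \<gamma>" unfolding rf_def by blast
  qed
qed (auto simp: rf_def)

lemma alpha_rp: "alpha_lim X V \<gamma> = lc_hull X V (rp \<gamma>)"
  unfolding alpha_lim_def rp_eq ..
lemma omega_rf: "omega_lim X V \<gamma> = lc_hull X V (rf \<gamma>)"
  unfolding omega_lim_def rf_eq ..

lemma rp_shift:
  assumes "\<forall>t\<le>0. \<delta> t = \<rho> (s + t)"
  shows "rp \<delta> = rp \<rho>"
proof
  show "rp \<delta> \<subseteq> rp \<rho>"
  proof
    fix x assume x: "x \<in> rp \<delta>"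
    { fix t
      obtain u where "u \<le> min (t - s) 0" "\<delta> u = x" using x unfolding rp_def by blast
      hence "s + u \<le> t" "\<rho> (s + u) = x" using assms by auto
      hence "\<exists>u\<le>t. \<rho> u = x" by blast }
    thus "x \<in> rp \<rho>" unfolding rp_def by blast
  qed
  show "rp \<rho> \<subseteq> rp \<delta>"
  proof
    fix x assume x: "x \<in> rp \<rho>"
    { fix t
      obtain u where "u \<le> min t 0 + s" "\<rho> u = x" using x unfolding rp_def by blast
      moreover have "\<delta> (u - s) = \<rho> (s + (u - s))" using assms calculation(1) by auto
      ultimately have "u - s \<le> t" "\<delta> (u - s) = x" by auto
      hence "\<exists>u\<le>t. \<delta> u = x" by blast }
    thus "x \<in> rp \<delta>" unfolding rp_def by blast
  qed
qed

lemma rf_shift: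
  assumes "\<forall>t\<ge>c. \<delta> t = \<rho> (t + k)"
  shows "rf \<delta> = rf \<rho>"
proof
  show "rf \<delta> \<subseteq> rf \<rho>"
  proof
    fix x assume x: "x \<in> rf \<delta>"
    { fix t
      obtain u where "u \<ge> max (t - k) c" "\<delta> u = x" using x unfolding rf_def by blast
      hence "u + k \<ge> t" "\<rho> (u + k) = x" using assms by auto
      hence "\<exists>u\<ge>t. \<rho> u = x" by blast }
    thus "x \<in> rf \<rho>" unfolding rf_def by blast
  qed
  show "rf \<rho> \<subseteq> rf \<delta>"
  proof
    fix x assume x: "x \<in> rf \<rho>"
    { fix t
      obtain u where "u \<ge> max t c + k" "\<rho> u = x" using x unfolding rf_def by blast
      moreover have "\<delta> (u - k) = \<rho> (u - k + k)" using assms calculation(1) by auto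
      ultimately have "u - k \<ge> t" "\<delta> (u - k) = x" by auto
      hence "\<exists>u\<ge>t. \<delta> u = x" by blast }
    thus "x \<in> rf \<delta>" unfolding rf_def by blast
  qed
qed




definition step :: "'a topology \<Rightarrow> 'a set set \<Rightarrow> 'a \<Rightarrow> 'a \<Rightarrow> bool" where
  "step X V x y \<longleftrightarrow> x \<in> topspace X \<and> y \<in> topspace X \<and> y \<in> Pi_mv X V x"

lemma reach_path:
  assumes "(step X V)\<^sup>*\<^sup>* x y" "x \<in> topspace X"
  shows "\<exists>\<sigma> b. sol_path X V \<sigma> 0 b \<and> \<sigma> 0 = x \<and> \<sigma> b = y"
  using assms(1)
proof (induction rule: rtranclp_induct)
  case base
  have "sol_path X V (\<lambda>_. x) 0 0" using assms(2) unfolding sol_path_def by auto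
  thus ?case by blast
next
  case (step y z)
  then obtain \<sigma> b where s: "sol_path X V \<sigma> 0 b" "\<sigma> 0 = x" "\<sigma> b = y" by blast
  define \<sigma>' where "\<sigma>' = \<sigma>(b + 1 := z)"
  have b0: "0 \<le> b" using s(1) unfolding sol_path_def by simp
  have st: "y \<in> topspace X" "z \<in> topspace X" "z \<in> Pi_mv X V y"
    using step(2) unfolding step_def by auto
  have "sol_path X V \<sigma>' 0 (b + 1)"
    unfolding sol_path_def
  proof (intro conjI ballI impI)
    show "0 \<le> b + 1" using b0 by simp
  next
    fix t assume t: "t \<in> {0..b + 1}"
    show "\<sigma>' t \<in> topspace X"
    proof (cases "t = b + 1")
      case True thus ?thesis using st unfolding \<sigma>'_def by simp
    next
      case False
      hence "t \<in> {0..b}" using t by auto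
      thus ?thesis using s(1) False unfolding sol_path_def \<sigma>'_def by auto
    qed
  next
    fix t assume t: "t \<in> {0..b + 1}" "t < b + 1"
    show "\<sigma>' (t + 1) \<in> Pi_mv X V (\<sigma>' t)"
    proof (cases "t = b")
      case True thus ?thesis using st s(3) unfolding \<sigma>'_def by simp
    next
      case False
      hence "t \<in> {0..b}" "t < b" using t by auto
      thus ?thesis using s(1) unfolding sol_path_def \<sigma>'_def by auto
    qed
  qed
  moreover have "\<sigma>' 0 = x" "\<sigma>' (b + 1) = z" using s b0 unfolding \<sigma>'_def by auto
  ultimately show ?case by blast
qed

lemma full_reach_nat:
  assumes "full_solution X V \<gamma>"
  shows "(step X V)\<^sup>*\<^sup>* (\<gamma> s) (\<gamma> (s + int n))"
proof (induction n)
  case 0 thus ?case by simp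
next
  case (Suc n)
  have "step X V (\<gamma> (s + int n)) (\<gamma> (s + int n + 1))"
    using assms unfolding full_solution_def step_def by blast
  moreover have "s + int n + 1 = s + int (Suc n)" by simp
  ultimately have "step X V (\<gamma> (s + int n)) (\<gamma> (s + int (Suc n)))" by metis
  with Suc show ?case by (rule rtranclp.rtrancl_into_rtrancl)
qed

lemma full_reach:
  assumes "full_solution X V \<gamma>" "s \<le> t"
  shows "(step X V)\<^sup>*\<^sup>* (\<gamma> s) (\<gamma> t)"
proof -
  have "t = s + int (nat (t - s))" using assms(2) by simp
  thus ?thesis using full_reach_nat[OF assms(1), of s "nat (t - s)"] by metis
qed

lemma concat:
  assumes f1: "full_solution X V \<rho>" and f2: "full_solution X V \<rho>'"
    and sp: "sol_path X V \<sigma> a b" and e1: "\<rho> s = \<sigma> a" and e2: "\<rho>' s' = \<sigma> b"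
  obtains \<delta> where "full_solution X V \<delta>" "rp \<delta> = rp \<rho>" "rf \<delta> = rf \<rho>'"
    "\<sigma> ` {a..b} \<subseteq> range \<delta>" "range \<delta> \<subseteq> range \<rho> \<union> \<sigma> ` {a..b} \<union> range \<rho>'" "\<delta> 0 = \<sigma> a"
proof -
  define d where "d = b - a"
  have d0: "0 \<le> d" using sp unfolding sol_path_def d_def by simp
  define \<delta> where "\<delta> t = (if t \<le> 0 then \<rho> (s + t) else if t \<le> d then \<sigma> (a + t) else \<rho>' (s' + (t - d)))" for t
  have sp1: "\<And>t. a \<le> t \<Longrightarrow> t \<le> b \<Longrightarrow> \<sigma> t \<in> topspace X"
    and sp2: "\<And>t. a \<le> t \<Longrightarrow> t < b \<Longrightarrow> \<sigma> (t + 1) \<in> Pi_mv X V (\<sigma> t)"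
    using sp unfolding sol_path_def by auto
  have fa: "\<And>t. \<rho> t \<in> topspace X" "\<And>t. \<rho> (t + 1) \<in> Pi_mv X V (\<rho> t)"
    using f1 unfolding full_solution_def by auto
  have fb: "\<And>t. \<rho>' t \<in> topspace X" "\<And>t. \<rho>' (t + 1) \<in> Pi_mv X V (\<rho>' t)"
    using f2 unfolding full_solution_def by auto
  have "full_solution X V \<delta>"
    unfolding full_solution_def
  proof (intro allI conjI)
    fix t
    show "\<delta> t \<in> topspace X" unfolding \<delta>_def using fa fb sp1 d_def by auto
    show "\<delta> (t + 1) \<in> Pi_mv X V (\<delta> t)"
    proof -
      consider "t + 1 \<le> 0" | "t = 0" "1 \<le> d" | "t = 0" "d = 0" | "0 < t" "t + 1 \<le> d"
        | "0 < t" "t = d" | "d < t" using d0 by linarith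
      thus ?thesis
      proof cases
        case 1
        hence "\<delta> (t + 1) = \<rho> (s + t + 1)" "\<delta> t = \<rho> (s + t)" unfolding \<delta>_def by (auto simp: add.assoc)
        thus ?thesis using fa(2) by simp
      next
        case 2
        hence "\<delta> (t + 1) = \<sigma> (a + 1)" "\<delta> t = \<sigma> a" unfolding \<delta>_def using e1 by auto
        moreover have "\<sigma> (a + 1) \<in> Pi_mv X V (\<sigma> a)" using sp2[of a] 2 d_def by auto
        ultimately show ?thesis by simp
      next
        case 3
        hence "\<delta> (t + 1) = \<rho>' (s' + 1)" "\<delta> t = \<rho>' s'" unfolding \<delta>_def using e1 e2 d_def by auto
        thus ?thesis using fb(2) by simp
      next
        case 4
        hence "\<delta> (t + 1) = \<sigma> (a + t + 1)" "\<delta> t = \<sigma> (a + t)" unfolding \<delta>_def by (auto simp: add.assoc)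
        moreover have "\<sigma> (a + t + 1) \<in> Pi_mv X V (\<sigma> (a + t))" using sp2[of "a + t"] 4 d_def by auto
        ultimately show ?thesis by simp
      next
        case 5
        hence "\<delta> (t + 1) = \<rho>' (s' + 1)" "\<delta> t = \<rho>' s'" unfolding \<delta>_def using e2 d_def by auto
        thus ?thesis using fb(2) by simp
      next
        case 6
        hence "\<delta> (t + 1) = \<rho>' (s' + (t - d) + 1)" "\<delta> t = \<rho>' (s' + (t - d))" unfolding \<delta>_def using d0 by (auto simp: algebra_simps)
        thus ?thesis using fb(2) by simp
      qed
    qed
  qed
  moreover have "rp \<delta> = rp \<rho>" by (rule rp_shift[of _ _ s]) (auto simp: \<delta>_def)
  moreover have "rf \<delta> = rf \<rho>'" by (rule rf_shift[of "d + 1" _ _ "s' - d"]) (use d0 in \<open>auto simp: \<delta>_def algebra_simps\<close>)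
  moreover have "\<sigma> ` {a..b} \<subseteq> range \<delta>"
  proof
    fix y assume "y \<in> \<sigma> ` {a..b}"
    then obtain t where t: "a \<le> t" "t \<le> b" "y = \<sigma> t" by auto
    show "y \<in> range \<delta>"
    proof (cases "t = a")
      case True
      hence "\<delta> 0 = y" unfolding \<delta>_def using e1 t by simp
      thus ?thesis by (metis rangeI)
    next
      case False
      hence "\<delta> (t - a) = y" unfolding \<delta>_def using t d_def by auto
      thus ?thesis by (metis rangeI)
    qed
  qed
  moreover have "range \<delta> \<subseteq> range \<rho> \<union> \<sigma> ` {a..b} \<union> range \<rho>'"
  proof
    fix y assume "y \<in> range \<delta>"
    then obtain t where t: "y = \<delta> t" by auto
    show "y \<in> range \<rho> \<union> \<sigma> ` {a..b} \<union> range \<rho>'"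
      unfolding t \<delta>_def using d_def by auto
  qed
  moreover have "\<delta> 0 = \<sigma> a" unfolding \<delta>_def using e1 by simp
  ultimately show ?thesis using that by blast
qed




lemma hull_reach:
  assumes fin: "finite (topspace X)" and mvf: "multivector_field X V" and A: "A \<subseteq> topspace X"
  shows "lc_hull X V A \<subseteq> {z \<in> topspace X. (\<exists>a\<in>A. (step X V)\<^sup>*\<^sup>* a z) \<and> (\<exists>a\<in>A. (step X V)\<^sup>*\<^sup>* z a)}"
    (is "_ \<subseteq> ?B")
proof (rule lc_hull_least)
  show "A \<subseteq> ?B" using A by blast
  show "locally_closed X ?B"
  proof (rule lc_finite[OF fin])
    show "?B \<subseteq> topspace X" by blast
  next
    fix x a b assume x: "x \<in> ?B" and a: "a \<in> X closure_of {x}" and b: "b \<in> X closure_of {a}" and bB: "b \<in> ?B"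
    have at: "a \<in> topspace X" "b \<in> topspace X"
      using a b closure_of_subset_topspace[of X "{x}"] closure_of_subset_topspace[of X "{a}"] by blast+
    have "step X V x a" using x at a unfolding step_def Pi_mv_def by blast
    moreover have "step X V a b" using at b unfolding step_def Pi_mv_def by blast
    ultimately have sxa: "step X V x a" and sab: "step X V a b" by auto
    from x obtain c where c: "c \<in> A" "(step X V)\<^sup>*\<^sup>* c x" by blast
    from bB obtain c' where c': "c' \<in> A" "(step X V)\<^sup>*\<^sup>* b c'" by blast
    have "(step X V)\<^sup>*\<^sup>* c a" using c(2) sxa by (rule rtranclp.rtrancl_into_rtrancl)
    moreover have "(step X V)\<^sup>*\<^sup>* a c'" using sab c'(2) by (rule converse_rtranclp_into_rtranclp)
    ultimately show "a \<in> ?B" using c(1) c'(1) at(1) by blast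
  qed
  show "compatible V ?B"
    unfolding compatible_def
  proof (intro exI conjI)
    show "mv V ` ?B \<subseteq> V" using mv_props(1)[OF mvf] by blast
    show "?B = \<Union>(mv V ` ?B)"
    proof
      show "?B \<subseteq> \<Union>(mv V ` ?B)" using mv_props(2)[OF mvf] by blast
    next
      show "\<Union>(mv V ` ?B) \<subseteq> ?B"
      proof
        fix w assume "w \<in> \<Union>(mv V ` ?B)"
        then obtain z where z: "z \<in> ?B" "w \<in> mv V z" by blast
        have wt: "w \<in> topspace X" using mv_sub[OF mvf] z by blast
        have "mv V w = mv V z" using mv_eq[OF mvf mv_props(1)[OF mvf] z(2)] z(1) by blast
        hence "z \<in> mv V w" using mv_props(2)[OF mvf] z(1) by blast
        hence s1: "step X V w z" using wt z(1) unfolding step_def Pi_mv_def by blast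
        have s2: "step X V z w" using wt z unfolding step_def Pi_mv_def by blast
        from z(1) obtain c where c: "c \<in> A" "(step X V)\<^sup>*\<^sup>* c z" by blast
        from z(1) obtain c' where c': "c' \<in> A" "(step X V)\<^sup>*\<^sup>* z c'" by blast
        have "(step X V)\<^sup>*\<^sup>* c w" using c(2) s2 by (rule rtranclp.rtrancl_into_rtrancl)
        moreover have "(step X V)\<^sup>*\<^sup>* w c'" using s1 c'(2) by (rule converse_rtranclp_into_rtranclp)
        ultimately show "w \<in> ?B" using c(1) c'(1) wt by blast
      qed
    qed
  qed
qed

lemma rp_top: "full_solution X V \<gamma> \<Longrightarrow> rp \<gamma> \<subseteq> topspace X"
  unfolding rp_def full_solution_def by blast
lemma rf_top: "full_solution X V \<gamma> \<Longrightarrow> rf \<gamma> \<subseteq> topspace X"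
  unfolding rf_def full_solution_def by blast

lemma alpha_reach:
  assumes "finite (topspace X)" "multivector_field X V" "full_solution X V \<gamma>" "z \<in> alpha_lim X V \<gamma>"
  shows "\<exists>a\<in>rp \<gamma>. (step X V)\<^sup>*\<^sup>* z a"
  using hull_reach[OF assms(1,2) rp_top[OF assms(3)]] assms(4) unfolding alpha_rp by blast

lemma omega_reach:
  assumes "finite (topspace X)" "multivector_field X V" "full_solution X V \<gamma>" "z \<in> omega_lim X V \<gamma>"
  shows "\<exists>a\<in>rf \<gamma>. (step X V)\<^sup>*\<^sup>* a z"
  using hull_reach[OF assms(1,2) rf_top[OF assms(3)]] assms(4) unfolding omega_rf by blast

lemma rp_rf_reach:
  assumes "full_solution X V \<gamma>" "a \<in> rp \<gamma>" "a' \<in> rf \<gamma>"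
  shows "(step X V)\<^sup>*\<^sup>* a a'"
proof -
  obtain s where s: "\<gamma> s = a" using assms(2) unfolding rp_def by blast
  obtain u where u: "u \<ge> s" "\<gamma> u = a'" using assms(3) unfolding rf_def by blast
  show ?thesis using full_reach[OF assms(1) u(1)] s u by simp
qed

lemma link_reach:
  assumes "finite (topspace X)" "multivector_field X V" "full_solution X V \<gamma>"
    "y \<in> alpha_lim X V \<gamma>" "y' \<in> omega_lim X V \<gamma>"
  shows "(step X V)\<^sup>*\<^sup>* y y'"
proof -
  obtain a where a: "a \<in> rp \<gamma>" "(step X V)\<^sup>*\<^sup>* y a" using alpha_reach[OF assms(1-4)] by blast
  obtain a' where a': "a' \<in> rf \<gamma>" "(step X V)\<^sup>*\<^sup>* a' y'" using omega_reach[OF assms(1-3,5)] by blast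
  show ?thesis using a a' rp_rf_reach[OF assms(3) a(1) a'(1)] by (meson rtranclp_trans)
qed

lemma concat_ess:
  assumes f1: "essential X V \<rho>" and f2: "essential X V \<rho>'"
    and sp: "sol_path X V \<sigma> a b" and e1: "\<rho> s = \<sigma> a" and e2: "\<rho>' s' = \<sigma> b"
  shows "\<exists>\<delta>. essential X V \<delta> \<and> alpha_lim X V \<delta> = alpha_lim X V \<rho> \<and> omega_lim X V \<delta> = omega_lim X V \<rho>'
    \<and> \<sigma> ` {a..b} \<subseteq> range \<delta> \<and> range \<delta> \<subseteq> range \<rho> \<union> \<sigma> ` {a..b} \<union> range \<rho>' \<and> \<delta> 0 = \<sigma> a"
proof -
  have ff: "full_solution X V \<rho>" "full_solution X V \<rho>'" using f1 f2 unfolding essential_def by auto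
  obtain \<delta> where d: "full_solution X V \<delta>" "rp \<delta> = rp \<rho>" "rf \<delta> = rf \<rho>'"
    "\<sigma> ` {a..b} \<subseteq> range \<delta>" "range \<delta> \<subseteq> range \<rho> \<union> \<sigma> ` {a..b} \<union> range \<rho>'" "\<delta> 0 = \<sigma> a"
    using concat[OF ff sp e1 e2] by blast
  have al: "alpha_lim X V \<delta> = alpha_lim X V \<rho>" "omega_lim X V \<delta> = omega_lim X V \<rho>'"
    unfolding alpha_rp omega_rf d(2,3) by auto
  have "essential X V \<delta>" using f1 f2 d(1) al unfolding essential_def by auto
  thus ?thesis using al d by blast
qed




lemma path3:
  assumes "x \<in> topspace X" "y \<in> topspace X" "z \<in> topspace X" "y \<in> Pi_mv X V x" "z \<in> Pi_mv X V y"
  defines "\<sigma> \<equiv> (\<lambda>t::int. if t = 0 then x else if t = 1 then y else z)"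
  shows "sol_path X V \<sigma> 0 2" "\<sigma> ` {0..2} = {x, y, z}"
proof -
  have e: "\<And>t::int. t \<in> {0..2} \<Longrightarrow> t = 0 \<or> t = 1 \<or> t = 2" by auto
  have v: "\<sigma> 0 = x" "\<sigma> 1 = y" "\<sigma> 2 = z" unfolding \<sigma>_def by auto
  show "sol_path X V \<sigma> 0 2"
    unfolding sol_path_def
  proof (intro conjI ballI impI)
    show "(0::int) \<le> 2" by simp
  next
    fix t assume t: "t \<in> {0..2::int}"
    show "\<sigma> t \<in> topspace X" using e[OF t] v assms(1-3) by auto
  next
    fix t assume t: "t \<in> {0..2::int}" "t < 2"
    hence "t = 0 \<or> t = 1" by auto
    thus "\<sigma> (t + 1) \<in> Pi_mv X V (\<sigma> t)"
    proof
      assume "t = 0" thus ?thesis using v assms(4) by simp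
    next
      assume "t = 1" hence "t + 1 = 2" by simp
      thus ?thesis using v assms(5) \<open>t = 1\<close> by simp
    qed
  qed
  show "\<sigma> ` {0..2} = {x, y, z}"
  proof
    show "\<sigma> ` {0..2} \<subseteq> {x, y, z}" unfolding \<sigma>_def by auto
    have "(0::int) \<in> {0..2}" "(1::int) \<in> {0..2}" "(2::int) \<in> {0..2}" by auto
    thus "{x, y, z} \<subseteq> \<sigma> ` {0..2}" using v by (metis image_eqI insert_subset empty_subsetI)
  qed
qed

locale msetting =
  fixes X :: "'a topology" and V :: "'a set set" and P :: "'p set" and M :: "'p \<Rightarrow> 'a set"
    and leq :: "'p \<Rightarrow> 'p \<Rightarrow> bool" and QQ :: "'p set set"
  assumes fin: "finite (topspace X)" and mvf: "multivector_field X V"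
    and mp: "morse_predecomposition X V P M" and adm: "admissible X V P M leq"
    and part: "set_partition P QQ" and po: "partial_order_on' QQ (induced_le leq)"
begin

lemma mp_disj: "p \<in> P \<Longrightarrow> q \<in> P \<Longrightarrow> p \<noteq> q \<Longrightarrow> M p \<inter> M q = {}"
  using mp unfolding morse_predecomposition_def by simp

lemma mp_iso: "p \<in> P \<Longrightarrow> isolated_invariant X V (M p)"
  using mp unfolding morse_predecomposition_def by simp

lemma mp_link: "ess_sol_in X V (topspace X) \<gamma> \<Longrightarrow> \<exists>p\<in>P. \<exists>q\<in>P. link X V \<gamma> (M p) (M q)"
  using mp unfolding morse_predecomposition_def by simp

lemma ess_full: "essential X V \<gamma> \<Longrightarrow> full_solution X V \<gamma>"
  unfolding essential_def by simp

lemma ess_top: "essential X V \<gamma> \<Longrightarrow> ess_sol_in X V (topspace X) \<gamma>"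
  unfolding ess_sol_in_def essential_def full_solution_def by blast

lemma eSol_ess: "\<gamma> \<in> eSol X V P M R \<Longrightarrow> essential X V \<gamma>"
  unfolding eSol_def ess_sol_in_def by simp

lemma eSol_range: "\<gamma> \<in> eSol X V P M R \<Longrightarrow> range \<gamma> \<subseteq> M_Q X V P M R"
  unfolding M_Q_def by blast

lemma MQ_top: "M_Q X V P M R \<subseteq> topspace X"
  unfolding M_Q_def eSol_def ess_sol_in_def by blast

lemma MQ_E: "x \<in> M_Q X V P M R \<Longrightarrow> \<exists>\<gamma> s. \<gamma> \<in> eSol X V P M R \<and> \<gamma> s = x"
  unfolding M_Q_def by blast

lemma Mp_props:
  assumes p: "p \<in> P"
  shows "M p \<subseteq> topspace X" "locally_closed X (M p)" "compatible V (M p)"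
proof -
  have ii: "isolated_invariant X V (M p)" using mp_iso p by blast
  hence inv: "Inv X V (M p) = M p" unfolding isolated_invariant_def invariant_def by simp
  show top: "M p \<subseteq> topspace X"
  proof
    fix x assume "x \<in> M p"
    hence "x \<in> Inv X V (M p)" using inv by simp
    then obtain \<gamma> where "essential X V \<gamma>" "\<gamma> 0 = x" unfolding Inv_def ess_sol_in_def by blast
    thus "x \<in> topspace X" unfolding essential_def full_solution_def by metis
  qed
  obtain N where N0: "(\<Union>x\<in>M p. Pi_mv X V x) \<subseteq> N"
    "\<forall>\<gamma> a b. sol_path X V \<gamma> a b \<and> \<gamma> ` {a..b} \<subseteq> N \<and> \<gamma> a \<in> M p \<and> \<gamma> b \<in> M p \<longrightarrow> \<gamma> ` {a..b} \<subseteq> M p"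
    using ii unfolding isolated_invariant_def by metis
  have N1: "\<And>x. x \<in> M p \<Longrightarrow> Pi_mv X V x \<subseteq> N" using N0(1) by blast
  have N2: "\<And>\<gamma> a b. sol_path X V \<gamma> a b \<Longrightarrow> \<gamma> ` {a..b} \<subseteq> N \<Longrightarrow> \<gamma> a \<in> M p \<Longrightarrow> \<gamma> b \<in> M p \<Longrightarrow> \<gamma> ` {a..b} \<subseteq> M p"
    using N0(2) by blast
  have key: "y \<in> M p" if x: "x \<in> M p" and z: "z \<in> M p" and y: "y \<in> topspace X"
    and yx: "y \<in> Pi_mv X V x" and zy: "z \<in> Pi_mv X V y" for x y z
  proof -
    let ?s = "(\<lambda>t. if t = 0 then x else if t = (1::int) then y else z)"
    have xt: "x \<in> topspace X" "z \<in> topspace X" using top x z by auto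
    note pp = path3[OF xt(1) y xt(2) yx zy]
    have "x \<in> N" using N1[OF x] Pi_self[OF mvf xt(1)] by blast
    moreover have "y \<in> N" using N1[OF x] yx by blast
    moreover have "z \<in> N" using N1[OF z] Pi_self[OF mvf xt(2)] by blast
    ultimately have "?s ` {0..2} \<subseteq> N" unfolding pp(2) by blast
    hence "?s ` {0..2} \<subseteq> M p" using N2[OF pp(1)] x z by simp
    thus ?thesis unfolding pp(2) by blast
  qed
  show "locally_closed X (M p)"
  proof (rule lc_finite[OF fin top])
    fix x a b assume x: "x \<in> M p" and a: "a \<in> X closure_of {x}" and b: "b \<in> X closure_of {a}" and bS: "b \<in> M p"
    have at: "a \<in> topspace X" using a closure_of_subset_topspace[of X "{x}"] by blast
    show "a \<in> M p" using key[OF x bS at] a b unfolding Pi_mv_def by blast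
  qed
  show "compatible V (M p)"
    unfolding compatible_def
  proof (intro exI conjI)
    show "mv V ` M p \<subseteq> V" using mv_props(1)[OF mvf] top by blast
    show "M p = \<Union>(mv V ` M p)"
    proof
      show "M p \<subseteq> \<Union>(mv V ` M p)" using mv_props(2)[OF mvf] top by blast
    next
      show "\<Union>(mv V ` M p) \<subseteq> M p"
      proof
        fix w assume "w \<in> \<Union>(mv V ` M p)"
        then obtain z where z: "z \<in> M p" "w \<in> mv V z" by blast
        have zt: "z \<in> topspace X" using z top by blast
        have wt: "w \<in> topspace X" using mv_sub[OF mvf zt] z by blast
        have "mv V w = mv V z" using mv_eq[OF mvf mv_props(1)[OF mvf zt] z(2)] by blast
        hence "z \<in> mv V w" using mv_props(2)[OF mvf zt] by simp
        hence "z \<in> Pi_mv X V w" unfolding Pi_mv_def by blast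
        moreover have "w \<in> Pi_mv X V z" using z(2) unfolding Pi_mv_def by blast
        ultimately show "w \<in> M p" using key[OF z(1) z(1) wt] by blast
      qed
    qed
  qed
qed

lemma P_cover: "p \<in> P \<Longrightarrow> \<exists>R\<in>QQ. p \<in> R"
  using part unfolding set_partition_def by blast

lemma QQ_sub: "R \<in> QQ \<Longrightarrow> R \<subseteq> P"
  using part unfolding set_partition_def by blast

lemma Mp_sub:
  assumes pR: "p \<in> R" and R: "R \<in> QQ"
  shows "M p \<subseteq> M_Q X V P M R"
proof
  fix y assume y: "y \<in> M p"
  have p: "p \<in> P" using QQ_sub[OF R] pR by blast
  note props = Mp_props[OF p]
  have ii: "isolated_invariant X V (M p)" using mp_iso p by blast
  hence inv: "Inv X V (M p) = M p" unfolding isolated_invariant_def invariant_def by simp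
  then obtain \<rho> where \<rho>: "ess_sol_in X V (M p) \<rho>" "\<rho> 0 = y" using y unfolding Inv_def by blast
  have ess: "essential X V \<rho>" using \<rho> unfolding ess_sol_in_def by simp
  have rng: "range \<rho> \<subseteq> M p" using \<rho> unfolding ess_sol_in_def by simp
  obtain p1 p2 where pq: "p1 \<in> P" "p2 \<in> P" "link X V \<rho> (M p1) (M p2)"
    using mp_link[OF ess_top[OF ess]] by blast
  have "rp \<rho> \<subseteq> M p" using rng unfolding rp_def by blast
  hence al: "alpha_lim X V \<rho> \<subseteq> M p" unfolding alpha_rp using lc_hull_least props(2,3) by blast
  have "rf \<rho> \<subseteq> M p" using rng unfolding rf_def by blast
  hence om: "omega_lim X V \<rho> \<subseteq> M p" unfolding omega_rf using lc_hull_least props(2,3) by blast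
  have disj: "\<And>q. q \<in> P \<Longrightarrow> q \<noteq> p \<Longrightarrow> M q \<inter> M p = {}"
    using mp_disj p by blast
  have "alpha_lim X V \<rho> \<inter> M p1 \<noteq> {}" using pq unfolding link_def by simp
  hence "p1 = p" using disj[OF pq(1)] al by blast
  hence a1: "alpha_lim X V \<rho> \<inter> M p \<noteq> {}" using pq unfolding link_def by simp
  have "omega_lim X V \<rho> \<inter> M p2 \<noteq> {}" using pq unfolding link_def by simp
  hence "p2 = p" using disj[OF pq(2)] om by blast
  hence a2: "omega_lim X V \<rho> \<inter> M p \<noteq> {}" using pq unfolding link_def by simp
  have "\<rho> \<in> eSol X V P M R"
    unfolding eSol_def idx_meet_def using ess_top[OF ess] a1 a2 p pR by blast
  thus "y \<in> M_Q X V P M R" using eSol_range \<rho>(2) by blast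
qed

lemma link_le:
  assumes r1: "\<rho> \<in> eSol X V P M R" and r2: "\<rho>' \<in> eSol X V P M R'"
    and re: "(step X V)\<^sup>*\<^sup>* (\<rho> s) (\<rho>' s')"
  shows "induced_le leq R' R"
proof -
  have e1: "essential X V \<rho>" and e2: "essential X V \<rho>'" using r1 r2 eSol_ess by auto
  have "\<rho> s \<in> topspace X" using ess_full[OF e1] unfolding full_solution_def by blast
  then obtain \<sigma> b where sp: "sol_path X V \<sigma> 0 b" "\<sigma> 0 = \<rho> s" "\<sigma> b = \<rho>' s'"
    using reach_path[OF re] by blast
  obtain \<delta> where d: "essential X V \<delta>" "alpha_lim X V \<delta> = alpha_lim X V \<rho>" "omega_lim X V \<delta> = omega_lim X V \<rho>'"
    using concat_ess[OF e1 e2 sp(1) sp(2)[symmetric] sp(3)[symmetric]] by blast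
  obtain q1 where q1: "q1 \<in> P" "q1 \<in> R" "M q1 \<inter> alpha_lim X V \<rho> \<noteq> {}"
    using r1 unfolding eSol_def idx_meet_def by blast
  obtain q2 where q2: "q2 \<in> P" "q2 \<in> R'" "M q2 \<inter> omega_lim X V \<rho>' \<noteq> {}"
    using r2 unfolding eSol_def idx_meet_def by blast
  have "link X V \<delta> (M q1) (M q2)" unfolding link_def using d q1 q2 ess_full[OF d(1)] by blast
  hence "leq q2 q1" using adm q1(1) q2(1) unfolding admissible_def by blast
  thus ?thesis unfolding induced_le_def using q1 q2 by blast
qed

lemma MQ_disj:
  assumes "R \<in> QQ" "R' \<in> QQ" "R \<noteq> R'"
  shows "M_Q X V P M R \<inter> M_Q X V P M R' = {}"
proof (rule ccontr)
  assume "M_Q X V P M R \<inter> M_Q X V P M R' \<noteq> {}"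
  then obtain x where x: "x \<in> M_Q X V P M R" "x \<in> M_Q X V P M R'" by blast
  obtain \<rho> s where r: "\<rho> \<in> eSol X V P M R" "\<rho> s = x" using MQ_E[OF x(1)] by blast
  obtain \<rho>' s' where r': "\<rho>' \<in> eSol X V P M R'" "\<rho>' s' = x" using MQ_E[OF x(2)] by blast
  have "induced_le leq R' R" using link_le[OF r(1) r'(1), of s s'] r r' by simp
  moreover have "induced_le leq R R'" using link_le[OF r'(1) r(1), of s' s] r r' by simp
  ultimately have "R = R'" using po assms unfolding partial_order_on'_def by blast
  thus False using assms by simp
qed

lemma MQ_inv: "invariant X V (M_Q X V P M R)"
  unfolding invariant_def
proof
  show "Inv X V (M_Q X V P M R) \<subseteq> M_Q X V P M R" unfolding Inv_def by blast
  show "M_Q X V P M R \<subseteq> Inv X V (M_Q X V P M R)"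
  proof
    fix x assume x: "x \<in> M_Q X V P M R"
    obtain \<rho> s where r: "\<rho> \<in> eSol X V P M R" "\<rho> s = x" using MQ_E[OF x] by blast
    have e: "essential X V \<rho>" using eSol_ess[OF r(1)] .
    have xt: "x \<in> topspace X" using x MQ_top by blast
    have sp: "sol_path X V (\<lambda>_. x) 0 0" using xt unfolding sol_path_def by simp
    obtain \<delta> where d: "essential X V \<delta>" "alpha_lim X V \<delta> = alpha_lim X V \<rho>" "omega_lim X V \<delta> = omega_lim X V \<rho>"
      "\<delta> 0 = x"
      using concat_ess[OF e e sp, of s s] r(2) by auto
    have "\<delta> \<in> eSol X V P M R" using r(1) d ess_top[OF d(1)] unfolding eSol_def by simp
    hence "ess_sol_in X V (M_Q X V P M R) \<delta>" using d(1) eSol_range unfolding ess_sol_in_def by blast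
    thus "x \<in> Inv X V (M_Q X V P M R)" unfolding Inv_def using x d(4) by blast
  qed
qed

lemma MQ_iso: "isolated_invariant X V (M_Q X V P M R)"
  unfolding isolated_invariant_def
proof (intro conjI exI)
  show "invariant X V (M_Q X V P M R)" by (rule MQ_inv)
  show "closedin X (topspace X)" by simp
  show "(\<Union>x\<in>M_Q X V P M R. Pi_mv X V x) \<subseteq> topspace X"
    using Pi_sub[OF mvf] MQ_top by blast
  show "\<forall>\<gamma> a b. sol_path X V \<gamma> a b \<and> \<gamma> ` {a..b} \<subseteq> topspace X \<and> \<gamma> a \<in> M_Q X V P M R \<and> \<gamma> b \<in> M_Q X V P M R
     \<longrightarrow> \<gamma> ` {a..b} \<subseteq> M_Q X V P M R"
  proof (intro allI impI)
    fix \<sigma> a b assume h: "sol_path X V \<sigma> a b \<and> \<sigma> ` {a..b} \<subseteq> topspace X \<and> \<sigma> a \<in> M_Q X V P M R \<and> \<sigma> b \<in> M_Q X V P M R"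
    hence sp: "sol_path X V \<sigma> a b" and ha: "\<sigma> a \<in> M_Q X V P M R" and hb: "\<sigma> b \<in> M_Q X V P M R" by auto
    obtain \<rho> s where r: "\<rho> \<in> eSol X V P M R" "\<rho> s = \<sigma> a" using MQ_E[OF ha] by blast
    obtain \<rho>' s' where r': "\<rho>' \<in> eSol X V P M R" "\<rho>' s' = \<sigma> b" using MQ_E[OF hb] by blast
    obtain \<delta> where d: "essential X V \<delta>" "alpha_lim X V \<delta> = alpha_lim X V \<rho>" "omega_lim X V \<delta> = omega_lim X V \<rho>'"
      "\<sigma> ` {a..b} \<subseteq> range \<delta>"
      using concat_ess[OF eSol_ess[OF r(1)] eSol_ess[OF r'(1)] sp r(2) r'(2)] by blast
    have "\<delta> \<in> eSol X V P M R" using r(1) r'(1) ess_top[OF d(1)] d(2,3) unfolding eSol_def by simp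
    thus "\<sigma> ` {a..b} \<subseteq> M_Q X V P M R" using d(4) eSol_range by blast
  qed
qed

lemma MQ_cover:
  assumes "ess_sol_in X V (topspace X) \<gamma>"
  shows "\<exists>R\<in>QQ. \<exists>R'\<in>QQ. link X V \<gamma> (M_Q X V P M R) (M_Q X V P M R')"
proof -
  obtain p q where pq: "p \<in> P" "q \<in> P" "link X V \<gamma> (M p) (M q)"
    using mp_link[OF assms] by blast
  obtain R R' where R: "R \<in> QQ" "p \<in> R" "R' \<in> QQ" "q \<in> R'" using P_cover pq by blast
  have "link X V \<gamma> (M_Q X V P M R) (M_Q X V P M R')"
    using pq(3) Mp_sub[OF R(2,1)] Mp_sub[OF R(4,3)] unfolding link_def by blast
  thus ?thesis using R by blast
qed

lemma Mp_in:
  assumes "p \<in> P" "R \<in> QQ" "M p \<inter> M_Q X V P M R \<noteq> {}"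
  shows "p \<in> R"
proof -
  obtain R' where R': "R' \<in> QQ" "p \<in> R'" using P_cover assms(1) by blast
  have "M_Q X V P M R' \<inter> M_Q X V P M R \<noteq> {}" using Mp_sub[OF R'(2,1)] assms(3) by blast
  hence "R' = R" using MQ_disj[OF R'(1) assms(2)] by blast
  thus ?thesis using R' by simp
qed

lemma MQ_sat:
  assumes R: "R \<in> QQ"
  shows "saturated X V (M_Q X V P M R)"
  unfolding saturated_def
proof (intro conjI allI impI)
  show "invariant X V (M_Q X V P M R)" by (rule MQ_inv)
  fix \<gamma> assume h: "ess_sol_in X V (topspace X) \<gamma> \<and> alpha_lim X V \<gamma> \<union> omega_lim X V \<gamma> \<subseteq> M_Q X V P M R"
  obtain p q where pq: "p \<in> P" "q \<in> P" "link X V \<gamma> (M p) (M q)"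
    using mp_link h by blast
  have "M p \<inter> M_Q X V P M R \<noteq> {}" using pq(3) h unfolding link_def by blast
  hence pR: "p \<in> R" using Mp_in[OF pq(1) R] by blast
  have "M q \<inter> M_Q X V P M R \<noteq> {}" using pq(3) h unfolding link_def by blast
  hence qR: "q \<in> R" using Mp_in[OF pq(2) R] by blast
  have "\<gamma> \<in> eSol X V P M R"
    unfolding eSol_def idx_meet_def using h pq pR qR unfolding link_def by blast
  thus "range \<gamma> \<subseteq> M_Q X V P M R" using eSol_range by blast
qed

lemma MQ_adm: "admissible X V QQ (M_Q X V P M) (induced_le leq)"
  unfolding admissible_def
proof (intro conjI ballI impI)
  show "preorder_on QQ (induced_le leq)" using po unfolding partial_order_on'_def by simp
  fix R R' assume R: "R \<in> QQ" "R' \<in> QQ" and "\<exists>\<gamma>. link X V \<gamma> (M_Q X V P M R) (M_Q X V P M R')"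
  then obtain \<gamma> where l: "link X V \<gamma> (M_Q X V P M R) (M_Q X V P M R')" by blast
  obtain y y' where y: "y \<in> alpha_lim X V \<gamma>" "y \<in> M_Q X V P M R" "y' \<in> omega_lim X V \<gamma>" "y' \<in> M_Q X V P M R'"
    using l unfolding link_def by blast
  have re: "(step X V)\<^sup>*\<^sup>* y y'" using link_reach[OF fin mvf _ y(1) y(3)] l unfolding link_def by blast
  obtain \<rho> s where r: "\<rho> \<in> eSol X V P M R" "\<rho> s = y" using MQ_E[OF y(2)] by blast
  obtain \<rho>' s' where r': "\<rho>' \<in> eSol X V P M R'" "\<rho>' s' = y'" using MQ_E[OF y(4)] by blast
  show "induced_le leq R' R" using link_le[OF r(1) r'(1), of s s'] r r' re by simp
qed

end


theorem theorem4p13: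
  fixes X :: "'a topology" and V :: "'a set set"
    and P :: "'p set" and M :: "'p \<Rightarrow> 'a set" and leq :: "'p \<Rightarrow> 'p \<Rightarrow> bool"
    and \<Q> :: "'p set set"
  assumes "finite (topspace X)" and "t0_space X"
    and "multivector_field X V"
    and "invariant X V (topspace X)"
    and "morse_predecomposition X V P M"
    and "admissible X V P M leq"
    and "set_partition P \<Q>"
    and "\<forall>Q\<in>\<Q>. convex_wrt P leq Q"
    and "partial_order_on' \<Q> (induced_le leq)"
  shows "morse_decomposition X V \<Q> (M_Q X V P M)"
proof -
  interpret ms: msetting X V P M leq \<Q>
    using assms(1,3,5,6,7,9) by (simp add: msetting_def)
  show ?thesis
    unfolding morse_decomposition_def morse_predecomposition_def
  proof (intro conjI ballI impI allI)
    fix R R' assume "R \<in> \<Q>" "R' \<in> \<Q>" "R \<noteq> R'"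
    thus "M_Q X V P M R \<inter> M_Q X V P M R' = {}" by (rule ms.MQ_disj)
  next
    fix R assume "R \<in> \<Q>"
    show "isolated_invariant X V (M_Q X V P M R)" by (rule ms.MQ_iso)
  next
    fix \<gamma> assume "ess_sol_in X V (topspace X) \<gamma>"
    thus "\<exists>p\<in>\<Q>. \<exists>q\<in>\<Q>. link X V \<gamma> (M_Q X V P M p) (M_Q X V P M q)" by (rule ms.MQ_cover)
  next
    fix R assume "R \<in> \<Q>"
    thus "saturated X V (M_Q X V P M R)" by (rule ms.MQ_sat)
  next
    show "\<exists>leqa. admissible X V \<Q> (M_Q X V P M) leqa \<and> partial_order_on' \<Q> leqa"
      using ms.MQ_adm assms(9) by blast
  qed
qed

end
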